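(* Let $\alpha$ be any graph function on a strongly connected directed graph $G$. Then any fair infinite sequence of raising operations applied starting from $\alpha$ produces graph functions converging to a raising-balanced graph function $\alpha^R$, and $\alpha^R$ is the same for all fair sequences of raising operations (independent of the order of operations). Symmetrically, any fair infinite sequence of lowering operations starting from $\alpha$ converges to a lowering-balanced graph function $\alpha^L$ that is independent of the order of operations.
   Context: $G$ is a strongly connected directed graph on vertex set $\{1,\dots,n\}$ (self-loops allowed). A graph function assigns a real weight $\alpha_{uv}$ to each edge $(u,v)$. Let $\alpha_v^{\text{in}}=\max_{u:(u,v)\in G}\alpha_{uv}$, $\alpha_v^{\text{out}}=\max_{w:(v,w)\in G}\alpha_{vw}$. For $x\in\mathbb R$ and $S$ a set of vertices, $\alpha+xS$ is the graph function $(\alpha+xS)_{uv}=\alpha_{uv}+x(I_S(u)-I_S(v))$, where $I_S$ is the indicator of $S$. A balancing operation at $v$ replaces $\alpha$ by $\alpha+\frac{\alpha_v^{\text{in}}-\alpha_v^{\text{out}}}{2}\{v\}$ (incoming edges at $v$ are increased by $(\alpha_v^{\text{out}}-\alpha_v^{\text{in}})/2$, outgoing edges decreased by the same amount, a self-loop unchanged). The raising imbalance at $v$ is $\rho_v^R=\max\{0,\alpha_v^{\text{out}}-\alpha_v^{\text{in}}\}$ and the lowering imbalance is $\rho_v^L=\max\{0,\alpha_v^{\text{in}}-\alpha_v^{\text{out}}\}$. A raising operation at $v$ performs the balancing operation at $v$ if $\rho^R_v>0$ and does nothing otherwise; a lowering operation at $v$ performs it if $\rho^L_v>0$ and does nothing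 otherwise. $\alpha$ is raising-balanced if $\rho^R_v=0$ for all $v$, lowering-balanced if $\rho^L_v=0$ for all $v$. A sequence of operations (each at a specified vertex) is fair if every vertex occurs infinitely often. *)

theory Defs
  imports Complex_Main
begin

text \<open>Vertex set {1..n}; edge set E (self-loops allowed); a graph function is
  alpha :: nat => nat => real, where alpha u v is the weight of edge (u,v)
  (values on non-edges are irrelevant).\<close>

definition strongly_connected :: "nat \<Rightarrow> (nat \<times> nat) set \<Rightarrow> bool" where
  "strongly_connected n E \<longleftrightarrow> E \<subseteq> {1..n} \<times> {1..n} \<and>
     (\<forall>u\<in>{1..n}. \<forall>v\<in>{1..n}. (u, v) \<in> E\<^sup>*)"

definition alpha_in :: "(nat \<times> nat) set \<Rightarrow> (nat \<Rightarrow> nat \<Rightarrow> real) \<Rightarrow> nat \<Rightarrow> real" where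
  "alpha_in E \<alpha> v = Max ((\<lambda>u. \<alpha> u v) ` {u. (u, v) \<in> E})"

definition alpha_out :: "(nat \<times> nat) set \<Rightarrow> (nat \<Rightarrow> nat \<Rightarrow> real) \<Rightarrow> nat \<Rightarrow> real" where
  "alpha_out E \<alpha> v = Max ((\<lambda>w. \<alpha> v w) ` {w. (v, w) \<in> E})"

definition shift :: "(nat \<Rightarrow> nat \<Rightarrow> real) \<Rightarrow> real \<Rightarrow> nat set \<Rightarrow> (nat \<Rightarrow> nat \<Rightarrow> real)" where
  "shift \<alpha> x S = (\<lambda>u v. \<alpha> u v + x * ((if u \<in> S then 1 else 0) - (if v \<in> S then 1 else 0)))"

definition balance_op :: "(nat \<times> nat) set \<Rightarrow> nat \<Rightarrow> (nat \<Rightarrow> nat \<Rightarrow> real) \<Rightarrow> (nat \<Rightarrow> nat \<Rightarrow> real)" where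
  "balance_op E v \<alpha> = shift \<alpha> ((alpha_in E \<alpha> v - alpha_out E \<alpha> v) / 2) {v}"

definition rho_R :: "(nat \<times> nat) set \<Rightarrow> (nat \<Rightarrow> nat \<Rightarrow> real) \<Rightarrow> nat \<Rightarrow> real" where
  "rho_R E \<alpha> v = max 0 (alpha_out E \<alpha> v - alpha_in E \<alpha> v)"

definition rho_L :: "(nat \<times> nat) set \<Rightarrow> (nat \<Rightarrow> nat \<Rightarrow> real) \<Rightarrow> nat \<Rightarrow> real" where
  "rho_L E \<alpha> v = max 0 (alpha_in E \<alpha> v - alpha_out E \<alpha> v)"

definition raise_op :: "(nat \<times> nat) set \<Rightarrow> nat \<Rightarrow> (nat \<Rightarrow> nat \<Rightarrow> real) \<Rightarrow> (nat \<Rightarrow> nat \<Rightarrow> real)" where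
  "raise_op E v \<alpha> = (if rho_R E \<alpha> v > 0 then balance_op E v \<alpha> else \<alpha>)"

definition lower_op :: "(nat \<times> nat) set \<Rightarrow> nat \<Rightarrow> (nat \<Rightarrow> nat \<Rightarrow> real) \<Rightarrow> (nat \<Rightarrow> nat \<Rightarrow> real)" where
  "lower_op E v \<alpha> = (if rho_L E \<alpha> v > 0 then balance_op E v \<alpha> else \<alpha>)"

definition raising_balanced :: "nat \<Rightarrow> (nat \<times> nat) set \<Rightarrow> (nat \<Rightarrow> nat \<Rightarrow> real) \<Rightarrow> bool" where
  "raising_balanced n E \<alpha> \<longleftrightarrow> (\<forall>v\<in>{1..n}. rho_R E \<alpha> v = 0)"

definition lowering_balanced :: "nat \<Rightarrow> (nat \<times> nat) set \<Rightarrow> (nat \<Rightarrow> nat \<Rightarrow> real) \<Rightarrow> bool" where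
  "lowering_balanced n E \<alpha> \<longleftrightarrow> (\<forall>v\<in>{1..n}. rho_L E \<alpha> v = 0)"

primrec run :: "(nat \<Rightarrow> 'g \<Rightarrow> 'g) \<Rightarrow> (nat \<Rightarrow> nat) \<Rightarrow> 'g \<Rightarrow> nat \<Rightarrow> 'g" where
  "run op \<sigma> \<alpha> 0 = \<alpha>"
| "run op \<sigma> \<alpha> (Suc k) = op (\<sigma> k) (run op \<sigma> \<alpha> k)"

definition fair :: "nat \<Rightarrow> (nat \<Rightarrow> nat) \<Rightarrow> bool" where
  "fair n \<sigma> \<longleftrightarrow> (\<forall>k. \<sigma> k \<in> {1..n}) \<and> (\<forall>v\<in>{1..n}. infinite {k. \<sigma> k = v})"

end

theory Submission
  imports Defs "HOL-Library.Infinite_Set"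
begin

definition pf :: "(nat \<Rightarrow> nat \<Rightarrow> real) \<Rightarrow> (nat \<Rightarrow> real) \<Rightarrow> nat \<Rightarrow> nat \<Rightarrow> real" where
  "pf \<alpha> p = (\<lambda>u v. \<alpha> u v + p u - p v)"

lemma rho_R_nonneg: "rho_R E a v \<ge> 0" by (simp add: rho_R_def)

lemma raise_pf:
  "raise_op E v (pf \<alpha> p) = pf \<alpha> (p(v := p v - rho_R E (pf \<alpha> p) v / 2))"
proof (cases "rho_R E (pf \<alpha> p) v > 0")
  case True
  then have r: "rho_R E (pf \<alpha> p) v = alpha_out E (pf \<alpha> p) v - alpha_in E (pf \<alpha> p) v"
    by (simp add: rho_R_def max_def split: if_splits)
  show ?thesis using True unfolding raise_op_def balance_op_def shift_def r
    by (auto simp: pf_def fun_eq_iff field_simps)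
next
  case False
  then have "rho_R E (pf \<alpha> p) v = 0" using rho_R_nonneg[of E "pf \<alpha> p" v] by linarith
  then show ?thesis using False unfolding raise_op_def by simp
qed

primrec Pot :: "(nat \<times> nat) set \<Rightarrow> (nat \<Rightarrow> nat \<Rightarrow> real) \<Rightarrow> (nat \<Rightarrow> nat) \<Rightarrow> nat \<Rightarrow> nat \<Rightarrow> real" where
  "Pot E \<alpha> \<sigma> 0 = (\<lambda>_. 0)"
| "Pot E \<alpha> \<sigma> (Suc k) = (Pot E \<alpha> \<sigma> k)(\<sigma> k := Pot E \<alpha> \<sigma> k (\<sigma> k) - rho_R E (pf \<alpha> (Pot E \<alpha> \<sigma> k)) (\<sigma> k) / 2)"

lemma run_Pot: "run (raise_op E) \<sigma> \<alpha> k = pf \<alpha> (Pot E \<alpha> \<sigma> k)"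
proof (induction k)
  case 0 show ?case by (simp add: pf_def)
next
  case (Suc k) then show ?case by (simp only: run.simps Pot.simps raise_pf)
qed

lemma Max_img_ge:
  fixes f g :: "'a \<Rightarrow> real"
  assumes "finite S" "\<And>x. x \<in> S \<Longrightarrow> g x - d \<le> f x" "d \<ge> 0"
  shows "Max (g ` S) - d \<le> Max (f ` S)"
proof (cases "S = {}")
  case True then show ?thesis using assms(3) by simp
next
  case False
  have "Max (g ` S) \<in> g ` S" using Max_in[of "g ` S"] assms(1) False by auto
  then obtain x where x: "x \<in> S" "Max (g ` S) = g x" by auto
  have "f x \<le> Max (f ` S)" using Max_ge[OF finite_imageI[OF assms(1)] imageI[OF x(1)]] .
  then show ?thesis using assms(2)[OF x(1)] x(2) by linarith
qed

lemma Max_img_le: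
  fixes f g :: "'a \<Rightarrow> real"
  assumes "finite S" "\<And>x. x \<in> S \<Longrightarrow> f x \<le> g x + d" "d \<ge> 0"
  shows "Max (f ` S) \<le> Max (g ` S) + d"
proof (cases "S = {}")
  case True then show ?thesis using assms(3) by simp
next
  case False
  have "Max (f ` S) \<in> f ` S" using Max_in[of "f ` S"] assms(1) False by auto
  then obtain x where x: "x \<in> S" "Max (f ` S) = f x" by auto
  have "g x \<le> Max (g ` S)" using Max_ge[OF finite_imageI[OF assms(1)] imageI[OF x(1)]] .
  then show ?thesis using assms(2)[OF x(1)] x(2) by linarith
qed

lemma no_overshoot:
  assumes fin1: "finite {u. (u, v) \<in> E}" and fin2: "finite {w. (v, w) \<in> E}"
    and bal: "rho_R E (pf \<alpha> q) v = 0"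
    and le: "\<And>u. u = v \<or> (u, v) \<in> E \<or> (v, u) \<in> E \<Longrightarrow> q u \<le> p u"
  shows "q v \<le> p v - rho_R E (pf \<alpha> p) v / 2"
proof -
  define d where "d = p v - q v"
  have d0: "d \<ge> 0" using le[of v] by (simp add: d_def)
  have i: "alpha_in E (pf \<alpha> q) v - d \<le> alpha_in E (pf \<alpha> p) v"
    unfolding alpha_in_def
    by (rule Max_img_ge[OF fin1 _ d0]) (use le in \<open>auto simp: pf_def d_def\<close>)
  have o: "alpha_out E (pf \<alpha> p) v \<le> alpha_out E (pf \<alpha> q) v + d"
    unfolding alpha_out_def
    by (rule Max_img_le[OF fin2 _ d0]) (use le in \<open>auto simp: pf_def d_def\<close>)
  have "alpha_out E (pf \<alpha> q) v \<le> alpha_in E (pf \<alpha> q) v"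
    using bal by (simp add: rho_R_def max_def split: if_splits)
  then have "rho_R E (pf \<alpha> p) v \<le> 2 * d"
    using i o d0 by (simp add: rho_R_def)
  then show ?thesis by (simp add: d_def)
qed

lemma fin_in: "(E::(nat\<times>nat) set) \<subseteq> {1..n} \<times> {1..n} \<Longrightarrow> finite {u. (u, v) \<in> E}"
proof -
  assume "E \<subseteq> {1..n} \<times> {1..n}"
  then have "{u. (u, v) \<in> E} \<subseteq> {1..n}" by auto
  then show ?thesis by (rule finite_subset) simp
qed

lemma fin_out: "(E::(nat\<times>nat) set) \<subseteq> {1..n} \<times> {1..n} \<Longrightarrow> finite {u. (v, u) \<in> E}"
proof -
  assume "E \<subseteq> {1..n} \<times> {1..n}"
  then have "{u. (v, u) \<in> E} \<subseteq> {1..n}" by auto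
  then show ?thesis by (rule finite_subset) simp
qed

lemma Pot_lower:
  assumes E: "E \<subseteq> {1..n} \<times> {1..n}" and fs: "\<forall>k. \<sigma> k \<in> {1..n}"
    and bal: "\<forall>v\<in>{1..n}. rho_R E (pf \<alpha> q) v = 0"
    and q0: "\<forall>u\<in>{1..n}. q u \<le> 0"
  shows "\<forall>u\<in>{1..n}. q u \<le> Pot E \<alpha> \<sigma> k u"
proof (induction k)
  case 0 then show ?case using q0 by simp
next
  case (Suc k)
  have v: "\<sigma> k \<in> {1..n}" using fs by blast
  have "q (\<sigma> k) \<le> Pot E \<alpha> \<sigma> k (\<sigma> k) - rho_R E (pf \<alpha> (Pot E \<alpha> \<sigma> k)) (\<sigma> k) / 2"
    apply (rule no_overshoot[OF fin_in[OF E] fin_out[OF E]])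
    using bal v apply blast
    using Suc.IH E v by auto
  then show ?case using Suc.IH by auto
qed

lemma Pot_out:
  assumes fs: "\<forall>k. \<sigma> k \<in> {1..n}" and u: "u \<notin> {1..n}"
  shows "Pot E \<alpha> \<sigma> k u = 0"
  using fs u by (induction k) auto

lemma tendsto_Max_img:
  fixes f :: "nat \<Rightarrow> 'a \<Rightarrow> real"
  assumes "finite S" "\<And>x. x \<in> S \<Longrightarrow> (\<lambda>k. f k x) \<longlonglongrightarrow> g x"
  shows "(\<lambda>k. Max ((\<lambda>x. f k x) ` S)) \<longlonglongrightarrow> Max (g ` S)"
  using assms
proof (induction S rule: finite_induct)
  case empty then show ?case by simp
next
  case (insert x S)
  show ?case
  proof (cases "S = {}")
    case True then show ?thesis using insert by simp
  next
    case False
    have "(\<lambda>k. max (f k x) (Max ((\<lambda>x. f k x) ` S))) \<longlonglongrightarrow> max (g x) (Max (g ` S))"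
      by (intro tendsto_max) (use insert in auto)
    then show ?thesis using False insert(1) by (simp add: Max_insert)
  qed
qed

lemma rho_tendsto:
  assumes fin1: "finite {u. (u, v) \<in> E}" and fin2: "finite {w. (v, w) \<in> E}"
    and conv: "\<And>u. (\<lambda>k. p k u) \<longlonglongrightarrow> L u"
  shows "(\<lambda>k. rho_R E (pf \<alpha> (p k)) v) \<longlonglongrightarrow> rho_R E (pf \<alpha> L) v"
proof -
  have i: "(\<lambda>k. alpha_in E (pf \<alpha> (p k)) v) \<longlonglongrightarrow> alpha_in E (pf \<alpha> L) v"
    unfolding alpha_in_def pf_def
    by (rule tendsto_Max_img[OF fin1, where f="\<lambda>k u. \<alpha> u v + p k u - p k v"]) (intro tendsto_intros conv)
  have o: "(\<lambda>k. alpha_out E (pf \<alpha> (p k)) v) \<longlonglongrightarrow> alpha_out E (pf \<alpha> L) v"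
    unfolding alpha_out_def pf_def
    by (rule tendsto_Max_img[OF fin2, where f="\<lambda>k w. \<alpha> v w + p k v - p k w"]) (intro tendsto_intros conv)
  show ?thesis unfolding rho_R_def by (intro tendsto_intros i o)
qed


lemma fair_limit:
  assumes E: "E \<subseteq> {1..n} \<times> {1..n}" and fair: "fair n \<sigma>"
    and bal: "\<forall>v\<in>{1..n}. rho_R E (pf \<alpha> q) v = 0" and q0: "\<forall>u\<in>{1..n}. q u \<le> 0"
  shows "\<exists>L. (\<forall>u. (\<lambda>k. Pot E \<alpha> \<sigma> k u) \<longlonglongrightarrow> L u) \<and> (\<forall>v\<in>{1..n}. rho_R E (pf \<alpha> L) v = 0)
     \<and> (\<forall>u\<in>{1..n}. L u \<le> 0) \<and> (\<forall>q'. (\<forall>v\<in>{1..n}. rho_R E (pf \<alpha> q') v = 0) \<longrightarrow>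
          (\<forall>u\<in>{1..n}. q' u \<le> 0) \<longrightarrow> (\<forall>u\<in>{1..n}. q' u \<le> L u))"
proof -
  have fs: "\<forall>k. \<sigma> k \<in> {1..n}" using fair by (simp add: fair_def)
  have dec: "\<And>u. decseq (\<lambda>k. Pot E \<alpha> \<sigma> k u)"
    by (rule decseq_SucI) (auto simp: rho_R_nonneg)
  have conv: "\<forall>u. \<exists>L. (\<lambda>k. Pot E \<alpha> \<sigma> k u) \<longlonglongrightarrow> L"
  proof
    fix u show "\<exists>L. (\<lambda>k. Pot E \<alpha> \<sigma> k u) \<longlonglongrightarrow> L"
    proof (cases "u \<in> {1..n}")
      case True
      with Pot_lower[OF E fs bal q0] have "\<forall>k. q u \<le> Pot E \<alpha> \<sigma> k u" by blast
      from decseq_convergent[OF dec this] show ?thesis by blast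
    next
      case False
      then have "\<forall>k. Pot E \<alpha> \<sigma> k u = 0" using Pot_out[OF fs] by blast
      then show ?thesis by auto
    qed
  qed
  then obtain L where L: "\<forall>u. (\<lambda>k. Pot E \<alpha> \<sigma> k u) \<longlonglongrightarrow> L u" by metis
  have low: "\<forall>u\<in>{1..n}. q' u \<le> L u"
    if "\<forall>v\<in>{1..n}. rho_R E (pf \<alpha> q') v = 0" "\<forall>u\<in>{1..n}. q' u \<le> 0" for q'
  proof
    fix u assume u: "u \<in> {1..n}"
    have "\<forall>k. q' u \<le> Pot E \<alpha> \<sigma> k u" using Pot_lower[OF E fs that] u by blast
    then show "q' u \<le> L u" using LIMSEQ_le_const[OF L[rule_format, of u]] by blast
  qed
  have nonpos: "\<forall>u\<in>{1..n}. L u \<le> 0"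
  proof
    fix u
    have "\<forall>k. Pot E \<alpha> \<sigma> k u \<le> Pot E \<alpha> \<sigma> 0 u" using dec[of u] unfolding decseq_def by (metis Pot.simps(1) zero_le)
    then show "L u \<le> 0" using LIMSEQ_le_const2[OF L[rule_format, of u]] by auto
  qed
  have bal_L: "\<forall>v\<in>{1..n}. rho_R E (pf \<alpha> L) v = 0"
  proof
    fix v assume v: "v \<in> {1..n}"
    let ?r = "\<lambda>k. rho_R E (pf \<alpha> (Pot E \<alpha> \<sigma> k)) v"
    let ?D = "\<lambda>k. Pot E \<alpha> \<sigma> k v - Pot E \<alpha> \<sigma> (Suc k) v"
    let ?R = "rho_R E (pf \<alpha> L) v"
    have r: "?r \<longlonglongrightarrow> ?R"
      by (rule rho_tendsto[OF fin_in[OF E] fin_out[OF E]]) (use L in blast)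
    have "?D \<longlonglongrightarrow> L v - L v"
      by (intro tendsto_diff L[rule_format] LIMSEQ_Suc)
    then have D: "?D \<longlonglongrightarrow> 0" by simp
    show "?R = 0"
    proof (rule ccontr)
      assume ne: "?R \<noteq> 0"
      have pos: "?R > 0" using ne rho_R_nonneg[of E "pf \<alpha> L" v] by linarith
      have e1: "eventually (\<lambda>k. ?R/2 < ?r k) sequentially"
        by (rule order_tendstoD(1)[OF r]) (use pos in simp)
      have e2: "eventually (\<lambda>k. ?D k < ?R/4) sequentially"
        by (rule order_tendstoD(2)[OF D]) (use pos in simp)
      obtain N where N: "\<forall>k\<ge>N. ?R/2 < ?r k \<and> ?D k < ?R/4"
        using eventually_conj[OF e1 e2] unfolding eventually_sequentially by blast
      have "infinite {k. \<sigma> k = v}" using fair v by (simp add: fair_def)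
      then obtain k where k: "k \<ge> N" "\<sigma> k = v" unfolding infinite_nat_iff_unbounded_le by blast
      have "Pot E \<alpha> \<sigma> (Suc k) v = Pot E \<alpha> \<sigma> k v - ?r k / 2" using k(2) by simp
      then show False using N k(1) by auto
    qed
  qed
  show ?thesis using L bal_L nonpos low by blast
qed

lemma raise_main:
  assumes E: "E \<subseteq> {1..n} \<times> {1..n}"
    and qb: "raising_balanced n E (pf \<alpha> q)"
  shows "\<exists>\<alpha>R. raising_balanced n E \<alpha>R \<and> (\<forall>\<sigma>. fair n \<sigma> \<longrightarrow>
            (\<forall>(u, v)\<in>E. (\<lambda>k. run (raise_op E) \<sigma> \<alpha> k u v) \<longlonglongrightarrow> \<alpha>R u v))"
proof -
  define c where "c = (\<Sum>w\<in>{1..n}. \<bar>q w\<bar>)"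
  define q' where "q' = (\<lambda>u. q u - c)"
  have pq: "pf \<alpha> q' = pf \<alpha> q" by (simp add: pf_def q'_def fun_eq_iff)
  have bal: "\<forall>v\<in>{1..n}. rho_R E (pf \<alpha> q') v = 0" using qb by (simp add: pq raising_balanced_def)
  have q0: "\<forall>u\<in>{1..n}. q' u \<le> 0"
  proof
    fix u assume u: "u \<in> {1..n}"
    have "\<bar>q u\<bar> \<le> c" unfolding c_def by (rule member_le_sum) (use u in auto)
    then show "q' u \<le> 0" by (simp add: q'_def)
  qed
  show ?thesis
  proof (cases "\<exists>\<sigma>. fair n \<sigma>")
    case False
    then show ?thesis using qb by blast
  next
    case True
    then obtain \<sigma>0 where f0: "fair n \<sigma>0" by blast
    obtain L0 where L0: "\<forall>u. (\<lambda>k. Pot E \<alpha> \<sigma>0 k u) \<longlonglongrightarrow> L0 u" "\<forall>v\<in>{1..n}. rho_R E (pf \<alpha> L0) v = 0"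
      "\<forall>u\<in>{1..n}. L0 u \<le> 0" "\<forall>q'. (\<forall>v\<in>{1..n}. rho_R E (pf \<alpha> q') v = 0) \<longrightarrow>
          (\<forall>u\<in>{1..n}. q' u \<le> 0) \<longrightarrow> (\<forall>u\<in>{1..n}. q' u \<le> L0 u)"
      using fair_limit[OF E f0 bal q0] by blast
    have "\<forall>\<sigma>. fair n \<sigma> \<longrightarrow> (\<forall>(u, v)\<in>E. (\<lambda>k. run (raise_op E) \<sigma> \<alpha> k u v) \<longlonglongrightarrow> pf \<alpha> L0 u v)"
    proof (intro allI impI)
      fix \<sigma> assume f: "fair n \<sigma>"
      obtain L where L: "\<forall>u. (\<lambda>k. Pot E \<alpha> \<sigma> k u) \<longlonglongrightarrow> L u" "\<forall>v\<in>{1..n}. rho_R E (pf \<alpha> L) v = 0"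
        "\<forall>u\<in>{1..n}. L u \<le> 0" "\<forall>q'. (\<forall>v\<in>{1..n}. rho_R E (pf \<alpha> q') v = 0) \<longrightarrow>
          (\<forall>u\<in>{1..n}. q' u \<le> 0) \<longrightarrow> (\<forall>u\<in>{1..n}. q' u \<le> L u)"
        using fair_limit[OF E f bal q0] by blast
      have eq: "\<forall>u\<in>{1..n}. L u = L0 u"
        using L(4) L0(4) L0(2) L0(3) L(2) L(3) by (meson order_antisym)
      show "\<forall>(u, v)\<in>E. (\<lambda>k. run (raise_op E) \<sigma> \<alpha> k u v) \<longlonglongrightarrow> pf \<alpha> L0 u v"
      proof (clarify)
        fix u v assume uv: "(u, v) \<in> E"
        then have "u \<in> {1..n}" "v \<in> {1..n}" using E by auto
        then have eqv: "\<alpha> u v + L u - L v = pf \<alpha> L0 u v" using eq by (simp add: pf_def)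
        have lim: "(\<lambda>k. \<alpha> u v + Pot E \<alpha> \<sigma> k u - Pot E \<alpha> \<sigma> k v) \<longlonglongrightarrow> \<alpha> u v + L u - L v"
          by (intro tendsto_intros L(1)[rule_format])
        show "(\<lambda>k. run (raise_op E) \<sigma> \<alpha> k u v) \<longlonglongrightarrow> pf \<alpha> L0 u v"
          unfolding run_Pot eqv[symmetric] unfolding pf_def by (rule lim)
      qed
    qed
    moreover have "raising_balanced n E (pf \<alpha> L0)" using L0(2) by (simp add: raising_balanced_def)
    ultimately show ?thesis by blast
  qed
qed


definition walk :: "(nat \<times> nat) set \<Rightarrow> (nat \<Rightarrow> nat) \<Rightarrow> nat \<Rightarrow> bool" where
  "walk E f L \<longleftrightarrow> (\<forall>i<L. (f i, f (Suc i)) \<in> E)"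

definition wt :: "(nat \<Rightarrow> nat \<Rightarrow> real) \<Rightarrow> (nat \<Rightarrow> nat) \<Rightarrow> nat \<Rightarrow> real" where
  "wt \<beta> f L = (\<Sum>i<L. \<beta> (f i) (f (Suc i)))"

lemma walk_in:
  assumes "E \<subseteq> V \<times> V" "walk E f L" "0 < L" "i \<le> L"
  shows "f i \<in> V"
proof (cases "i < L")
  case True then show ?thesis using assms unfolding walk_def by blast
next
  case False
  then have i: "i = Suc (L - 1)" using assms by simp
  have "L - 1 < L" using assms by simp
  then have "(f (L - 1), f (Suc (L - 1))) \<in> E" using assms unfolding walk_def by blast
  then show ?thesis using assms(1) i by blast
qed

lemma wt_cong: "(\<And>i. i \<le> L \<Longrightarrow> f i = g i) \<Longrightarrow> wt \<beta> f L = wt \<beta> g L"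
  unfolding wt_def by (rule sum.cong) auto

lemma walk_split:
  assumes E: "E \<subseteq> {1..n} \<times> {1..n}" and w: "walk E f L" and L: "L > n"
  shows "\<exists>g L' h M. walk E g L' \<and> g 0 = f 0 \<and> g L' = f L \<and> L' < L \<and>
     walk E h M \<and> h M = h 0 \<and> 0 < M \<and> M < L \<and> wt \<beta> f L = wt \<beta> g L' + wt \<beta> h M"
proof -
  have sub: "f ` {0..<L} \<subseteq> {1..n}" using walk_in[OF E w] L by auto
  have "\<not> inj_on f {0..<L}"
  proof
    assume "inj_on f {0..<L}"
    from card_inj_on_le[OF this sub] show False using L by simp
  qed
  then obtain i j where ij0: "i \<in> {0..<L}" "j \<in> {0..<L}" "i \<noteq> j" "f i = f j"
    unfolding inj_on_def by blast
  then obtain i j where ij: "i < j" "j < L" "f i = f j"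
    by (metis atLeastLessThan_iff linorder_neq_iff)
  define d where "d = j - i"
  have d: "0 < d" "i + d = j" using ij by (auto simp: d_def)
  define g where "g = (\<lambda>k. if k < i then f k else f (k + d))"
  define h where "h = (\<lambda>k. f (k + i))"
  define L' where "L' = L - d"
  have L': "i \<le> L'" "L' + d = L" using ij d by (auto simp: L'_def)
  have gw: "walk E g L'"
    unfolding walk_def
  proof (intro allI impI)
    fix k assume k: "k < L'"
    show "(g k, g (Suc k)) \<in> E"
    proof (cases "Suc k < i")
      case True then show ?thesis using w ij unfolding walk_def g_def by auto
    next
      case False
      show ?thesis
      proof (cases "k < i")
        case True
        then have "Suc k = i" using False by simp
        then have "g (Suc k) = f (Suc k)" using d ij by (simp add: g_def)
        moreover have "g k = f k" using True by (simp add: g_def)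
        ultimately show ?thesis using w ij True unfolding walk_def by auto
      next
        case False
        then have "g k = f (k + d)" "g (Suc k) = f (Suc (k + d))" by (auto simp: g_def)
        moreover have "k + d < L" using k L' by simp
        ultimately show ?thesis using w unfolding walk_def by auto
      qed
    qed
  qed
  have g0: "g 0 = f 0" using d ij by (auto simp: g_def)
  have gL: "g L' = f L" using L' by (simp add: g_def)
  have hw: "walk E h d" unfolding walk_def h_def
    using w ij d unfolding walk_def by auto
  have hM: "h d = h 0" using d ij by (simp add: h_def add.commute)
  let ?b = "\<lambda>k. \<beta> (f k) (f (Suc k))"
  have s1: "wt \<beta> f L = sum ?b {0..<i} + sum ?b {i..<j} + sum ?b {j..<L}"
    unfolding wt_def lessThan_atLeast0
    using ij by (simp add: sum.atLeastLessThan_concat)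
  have s2: "wt \<beta> h d = sum ?b {i..<j}"
  proof -
    have "wt \<beta> h d = (\<Sum>k = 0..<d. ?b (k + i))" unfolding wt_def h_def lessThan_atLeast0 by simp
    also have "\<dots> = sum ?b {0 + i..<d + i}" by (rule sum.shift_bounds_nat_ivl[symmetric])
    also have "\<dots> = sum ?b {i..<j}" using d by (simp add: add.commute)
    finally show ?thesis .
  qed
  have s3: "wt \<beta> g L' = sum ?b {0..<i} + sum ?b {j..<L}"
  proof -
    let ?c = "\<lambda>k. \<beta> (g k) (g (Suc k))"
    have "wt \<beta> g L' = sum ?c {0..<i} + sum ?c {i..<L'}"
      unfolding wt_def lessThan_atLeast0 using L' by (simp add: sum.atLeastLessThan_concat)
    moreover have "sum ?c {0..<i} = sum ?b {0..<i}"
    proof (rule sum.cong)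
      fix k assume "k \<in> {0..<i}"
      then have k: "k < i" by simp
      then have "g k = f k" by (simp add: g_def)
      moreover have "g (Suc k) = f (Suc k)"
      proof (cases "Suc k < i")
        case True then show ?thesis by (simp add: g_def)
      next
        case False with k have "Suc k = i" by simp
        then show ?thesis using d ij by (simp add: g_def)
      qed
      ultimately show "?c k = ?b k" by simp
    qed simp
    moreover have "sum ?c {i..<L'} = sum ?b {j..<L}"
    proof -
      have "sum ?c {i..<L'} = (\<Sum>k = i..<L'. ?b (k + d))"
        by (rule sum.cong) (auto simp: g_def)
      also have "\<dots> = sum ?b {i + d..<L' + d}" by (rule sum.shift_bounds_nat_ivl[symmetric])
      also have "\<dots> = sum ?b {j..<L}" using d L' by simp
      finally show ?thesis .
    qed
    ultimately show ?thesis by simp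
  qed
  show ?thesis
    apply (rule exI[of _ g], rule exI[of _ L'], rule exI[of _ h], rule exI[of _ d])
    using gw g0 gL hw hM s1 s2 s3 d L' ij by auto
qed

lemma closed_nonpos:
  assumes E: "E \<subseteq> {1..n} \<times> {1..n}"
    and short: "\<And>f L. walk E f L \<Longrightarrow> f L = f 0 \<Longrightarrow> 0 < L \<Longrightarrow> L \<le> n \<Longrightarrow> wt \<beta> f L \<le> 0"
  shows "walk E f L \<Longrightarrow> f L = f 0 \<Longrightarrow> wt \<beta> f L \<le> 0"
proof (induction L arbitrary: f rule: less_induct)
  case (less L)
  show ?case
  proof (cases "L = 0")
    case True then show ?thesis by (simp add: wt_def)
  next
    case False
    show ?thesis
    proof (cases "L \<le> n")
      case True with short less.prems False show ?thesis by auto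
    next
      case False
      then have "L > n" by simp
      from walk_split[OF E less.prems(1) this, of \<beta>] obtain g L' h M where
        gh: "walk E g L'" "g 0 = f 0" "g L' = f L" "L' < L" "walk E h M" "h M = h 0" "0 < M" "M < L"
          "wt \<beta> f L = wt \<beta> g L' + wt \<beta> h M" by blast
      have "wt \<beta> g L' \<le> 0" using less.IH[of L' g] gh less.prems by auto
      moreover have "wt \<beta> h M \<le> 0" using less.IH[of M h] gh by auto
      ultimately show ?thesis using gh by linarith
    qed
  qed
qed

lemma walk_reduce:
  assumes E: "E \<subseteq> {1..n} \<times> {1..n}"
    and cl: "\<And>f L. walk E f L \<Longrightarrow> f L = f 0 \<Longrightarrow> wt \<beta> f L \<le> 0"
  shows "walk E f L \<Longrightarrow> \<exists>g L'. walk E g L' \<and> g 0 = f 0 \<and> g L' = f L \<and> L' \<le> n \<and> wt \<beta> f L \<le> wt \<beta> g L'"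
proof (induction L arbitrary: f rule: less_induct)
  case (less L)
  show ?case
  proof (cases "L \<le> n")
    case True then show ?thesis using less.prems by auto
  next
    case False
    then have "L > n" by simp
    from walk_split[OF E less.prems(1) this, of \<beta>] obtain g L' h M where
      gh: "walk E g L'" "g 0 = f 0" "g L' = f L" "L' < L" "walk E h M" "h M = h 0" "0 < M" "M < L"
        "wt \<beta> f L = wt \<beta> g L' + wt \<beta> h M" by blast
    have "wt \<beta> h M \<le> 0" using cl gh by auto
    moreover obtain g' L'' where "walk E g' L''" "g' 0 = g 0" "g' L'' = g L'" "L'' \<le> n" "wt \<beta> g L' \<le> wt \<beta> g' L''"
      using less.IH[OF gh(4) gh(1)] by blast
    ultimately show ?thesis using gh by (intro exI[of _ g'] exI[of _ L'']) auto
  qed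
qed

lemma short_cycle:
  assumes E: "E \<subseteq> {1..n} \<times> {1..n}"
  shows "walk E f L \<Longrightarrow> f L = f 0 \<Longrightarrow> 0 < L \<Longrightarrow> \<exists>g M. walk E g M \<and> g M = g 0 \<and> 0 < M \<and> M \<le> n"
proof (induction L arbitrary: f rule: less_induct)
  case (less L)
  show ?case
  proof (cases "L \<le> n")
    case True then show ?thesis using less.prems by auto
  next
    case False
    then have "L > n" by simp
    from walk_split[OF E less.prems(1) this, of "\<lambda>_ _. 0"] obtain h M where
      gh: "walk E h M" "h M = h 0" "0 < M" "M < L" by blast
    show ?thesis using less.IH[OF gh(4) gh(1) gh(2) gh(3)] .
  qed
qed

lemma rtrancl_walk: "(a, b) \<in> E\<^sup>* \<Longrightarrow> \<exists>f L. walk E f L \<and> f 0 = a \<and> f L = b"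
proof (induction rule: rtrancl_induct)
  case base show ?case by (rule exI[of _ "\<lambda>_. a"], rule exI[of _ 0]) (simp add: walk_def)
next
  case (step y z)
  then obtain f L where f: "walk E f L" "f 0 = a" "f L = y" by blast
  show ?case
    apply (rule exI[of _ "f(Suc L := z)"], rule exI[of _ "Suc L"])
    using f step(2) by (auto simp: walk_def less_Suc_eq)
qed

lemma walk_snoc:
  assumes "walk E f L" "(f L, z) \<in> E"
  shows "walk E (f(Suc L := z)) (Suc L)" "wt \<beta> (f(Suc L := z)) (Suc L) = wt \<beta> f L + \<beta> (f L) z"
proof -
  show "walk E (f(Suc L := z)) (Suc L)" using assms by (auto simp: walk_def less_Suc_eq)
  have "wt \<beta> (f(Suc L := z)) L = wt \<beta> f L" by (rule wt_cong) simp
  then show "wt \<beta> (f(Suc L := z)) (Suc L) = wt \<beta> f L + \<beta> (f L) z"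
    by (simp add: wt_def)
qed

lemma finite_walk_vals:
  fixes n :: nat
  assumes "\<And>f L. P f L \<Longrightarrow> L \<le> n \<and> (\<forall>i\<le>L. f i \<in> V)"
    and "\<And>f g L. (\<forall>i\<le>L. f i = g i) \<Longrightarrow> h f L = h g L"
    and "finite V"
  shows "finite {h f L | f L. P f L}"
proof -
  let ?S = "{xs. set xs \<subseteq> V \<and> length xs \<le> Suc n}"
  have "{h f L | f L. P f L} \<subseteq> (\<lambda>xs. h (\<lambda>i. xs ! i) (length xs - 1)) ` ?S"
  proof
    fix x assume "x \<in> {h f L | f L. P f L}"
    then obtain f L where x: "x = h f L" "P f L" by blast
    let ?xs = "map f [0..<Suc L]"
    have "?xs \<in> ?S" using assms(1)[OF x(2)] by auto
    moreover have "h (\<lambda>i. ?xs ! i) (length ?xs - 1) = h f L"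
      using assms(2)[where f="\<lambda>i. ?xs ! i" and g=f and L=L] by (simp add: nth_map_upt del: upt_Suc)
    ultimately show "x \<in> (\<lambda>xs. h (\<lambda>i. xs ! i) (length xs - 1)) ` ?S" using x by (metis (no_types, lifting) image_eqI)
  qed
  then show ?thesis by (rule finite_subset) (intro finite_imageI finite_lists_length_le assms(3))
qed


lemma walk_Suc:
  assumes "walk E f (Suc K)"
  shows "walk E f K" "(f K, f (Suc K)) \<in> E" "wt \<beta> f (Suc K) = wt \<beta> f K + \<beta> (f K) (f (Suc K))"
  using assms by (auto simp: walk_def wt_def)

lemma balanced_exists:
  assumes sc: "strongly_connected n E"
  shows "\<exists>q. raising_balanced n E (pf \<alpha> q)"
proof -
  have E: "E \<subseteq> {1..n} \<times> {1..n}" and reach: "\<And>u v. u \<in> {1..n} \<Longrightarrow> v \<in> {1..n} \<Longrightarrow> (u, v) \<in> E\<^sup>*"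
    using sc unfolding strongly_connected_def by auto
  show ?thesis
  proof (cases "E = {}")
    case True
    then show ?thesis by (simp add: raising_balanced_def rho_R_def alpha_in_def alpha_out_def)
  next
    case False
    then obtain a b where ab: "(a, b) \<in> E" by auto
    have abn: "a \<in> {1..n}" "b \<in> {1..n}" using ab E by auto
    obtain f1 L1 where f1: "walk E f1 L1" "f1 0 = b" "f1 L1 = a"
      using rtrancl_walk[OF reach[OF abn(2) abn(1)]] by blast
    define f0 where "f0 = (\<lambda>i. if i = 0 then a else f1 (i - 1))"
    have "walk E f0 (Suc L1)" unfolding walk_def
    proof (intro allI impI)
      fix i assume i: "i < Suc L1"
      show "(f0 i, f0 (Suc i)) \<in> E"
      proof (cases i)
        case 0 then show ?thesis using ab f1 by (simp add: f0_def)
      next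
        case (Suc k) then show ?thesis using f1(1) i by (simp add: f0_def walk_def)
      qed
    qed
    moreover have "f0 (Suc L1) = f0 0" using f1 by (simp add: f0_def)
    ultimately obtain g1 M1 where g1: "walk E g1 M1" "g1 M1 = g1 0" "0 < M1" "M1 \<le> n"
      using short_cycle[OF E] by blast
    define Cl where "Cl = {wt \<alpha> f L / real L | f L. walk E f L \<and> f L = f 0 \<and> 0 < L \<and> L \<le> n}"
    have finCl: "finite Cl" unfolding Cl_def
    proof (rule finite_walk_vals[where V="{1..n}" and n=n and P="\<lambda>f L. walk E f L \<and> f L = f 0 \<and> 0 < L \<and> L \<le> n"
          and h="\<lambda>f L. wt \<alpha> f L / real L"])
      fix f L assume "walk E f L \<and> f L = f 0 \<and> 0 < L \<and> L \<le> n"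
      then show "L \<le> n \<and> (\<forall>i\<le>L. f i \<in> {1..n})" using walk_in[OF E] by blast
    next
      fix f g :: "nat \<Rightarrow> nat" and L assume "\<forall>i\<le>L. f i = g i"
      then have "wt \<alpha> f L = wt \<alpha> g L" by (intro wt_cong) auto
      then show "wt \<alpha> f L / real L = wt \<alpha> g L / real L" by simp
    qed simp
    have Clne: "Cl \<noteq> {}" unfolding Cl_def using g1 by blast
    define \<mu> where "\<mu> = Max Cl"
    have "\<mu> \<in> Cl" unfolding \<mu>_def using Max_in[OF finCl Clne] .
    then obtain g0 L0 where g0: "walk E g0 L0" "g0 L0 = g0 0" "0 < L0" "L0 \<le> n" "wt \<alpha> g0 L0 / real L0 = \<mu>"
      unfolding Cl_def by auto
    define \<beta> where "\<beta> = (\<lambda>u v. \<alpha> u v - \<mu>)"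
    have wtb: "\<And>f L. wt \<beta> f L = wt \<alpha> f L - \<mu> * real L"
      by (simp add: wt_def \<beta>_def sum_subtractf)
    have short: "wt \<beta> f L \<le> 0" if "walk E f L" "f L = f 0" "0 < L" "L \<le> n" for f L
    proof -
      have "wt \<alpha> f L / real L \<in> Cl" unfolding Cl_def using that by blast
      then have "wt \<alpha> f L / real L \<le> \<mu>" unfolding \<mu>_def using Max_ge[OF finCl] by blast
      then have "wt \<alpha> f L \<le> \<mu> * real L" using that(3) by (simp add: pos_divide_le_eq)
      then show ?thesis by (simp add: wtb)
    qed
    have cl: "\<And>f L. walk E f L \<Longrightarrow> f L = f 0 \<Longrightarrow> wt \<beta> f L \<le> 0"
      using closed_nonpos[OF E short] by blast
    have crit: "wt \<beta> g0 L0 = 0" using g0(3,5) by (simp add: wtb field_simps)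
    define c where "c = g0 0"
    have cn: "c \<in> {1..n}" unfolding c_def using walk_in[OF E g0(1) g0(3)] by blast
    define W where "W = (\<lambda>v. {wt \<beta> f L | f L. walk E f L \<and> f 0 = c \<and> f L = v \<and> L \<le> n})"
    have finW: "finite (W v)" for v unfolding W_def
    proof (rule finite_walk_vals[where V="{1..n}" and n=n and P="\<lambda>f L. walk E f L \<and> f 0 = c \<and> f L = v \<and> L \<le> n"
          and h="\<lambda>f L. wt \<beta> f L"])
      fix f L assume a: "walk E f L \<and> f 0 = c \<and> f L = v \<and> L \<le> n"
      show "L \<le> n \<and> (\<forall>i\<le>L. f i \<in> {1..n})"
      proof (cases "L = 0")
        case True then show ?thesis using a cn by auto
      next
        case False then show ?thesis using a walk_in[OF E] by blast
      qed
    next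
      fix f g :: "nat \<Rightarrow> nat" and L assume "\<forall>i\<le>L. f i = g i"
      then show "wt \<beta> f L = wt \<beta> g L" by (intro wt_cong) auto
    qed simp
    define q where "q = (\<lambda>v. Max (W v))"
    have bound: "wt \<beta> f L \<le> q v" if bw: "walk E f L" "f 0 = c" "f L = v" for f L v
    proof -
      obtain g L' where g: "walk E g L'" "g 0 = f 0" "g L' = f L" "L' \<le> n" "wt \<beta> f L \<le> wt \<beta> g L'"
        using walk_reduce[OF E cl bw(1)] by blast
      have "wt \<beta> g L' \<in> W v" unfolding W_def using g bw by blast
      then have "wt \<beta> g L' \<le> q v" unfolding q_def using Max_ge[OF finW] by blast
      then show ?thesis using g by linarith
    qed
    have qW: "q v \<in> W v" if vn: "v \<in> {1..n}" for v
    proof -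
      obtain f L where f: "walk E f L" "f 0 = c" "f L = v"
        using rtrancl_walk[OF reach[OF cn vn]] by blast
      obtain g L' where g: "walk E g L'" "g 0 = f 0" "g L' = f L" "L' \<le> n"
        using walk_reduce[OF E cl f(1)] by blast
      have "W v \<noteq> {}" unfolding W_def using f g by blast
      then show ?thesis unfolding q_def using Max_in[OF finW] by blast
    qed
    have E1: "q u + \<beta> u v \<le> q v" if uvE: "(u, v) \<in> E" for u v
    proof -
      have "u \<in> {1..n}" using uvE E by auto
      then obtain f L where f: "walk E f L" "f 0 = c" "f L = u" "L \<le> n" "q u = wt \<beta> f L"
        using qW unfolding W_def by blast
      have fu: "(f L, v) \<in> E" using f(3) uvE by simp
      have "wt \<beta> (f(Suc L := v)) (Suc L) \<le> q v"
        by (rule bound) (use walk_snoc[OF f(1) fu] f in auto)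
      then show ?thesis using walk_snoc(2)[OF f(1) fu, of \<beta>] f by simp
    qed
    have E2: "\<exists>u. (u, v) \<in> E \<and> q v \<le> q u + \<beta> u v" if v: "v \<in> {1..n}" for v
    proof -
      obtain f L where f: "walk E f L" "f 0 = c" "f L = v" "L \<le> n" "q v = wt \<beta> f L"
        using qW[OF v] unfolding W_def by blast
      show ?thesis
      proof (cases L)
        case 0
        then have qv: "q v = 0" "v = c" using f by (auto simp: wt_def)
        obtain K where K: "L0 = Suc K" using g0(3) by (cases L0) auto
        have w: "walk E g0 K" "(g0 K, g0 (Suc K)) \<in> E" "wt \<beta> g0 (Suc K) = wt \<beta> g0 K + \<beta> (g0 K) (g0 (Suc K))"
          using walk_Suc[OF g0(1)[unfolded K]] by auto
        have gK: "g0 (Suc K) = v" using g0(2) K qv c_def by simp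
        have "wt \<beta> g0 K \<le> q (g0 K)" by (rule bound) (use w c_def in auto)
        then show ?thesis using w gK crit K qv by (intro exI[of _ "g0 K"]) auto
      next
        case (Suc K)
        have w: "walk E f K" "(f K, f (Suc K)) \<in> E" "wt \<beta> f (Suc K) = wt \<beta> f K + \<beta> (f K) (f (Suc K))"
          using walk_Suc[OF f(1)[unfolded Suc]] by auto
        have "wt \<beta> f K \<le> q (f K)" by (rule bound) (use w f in auto)
        then show ?thesis using w f Suc by (intro exI[of _ "f K"]) auto
      qed
    qed
    have outE: "\<exists>w. (v, w) \<in> E" if v: "v \<in> {1..n}" for v
    proof -
      have "(v, b) \<in> E\<^sup>+" using rtrancl_into_trancl1[OF reach[OF v abn(1)] ab] .
      then show ?thesis using tranclD by fastforce
    qed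
    have edge_le: "pf \<alpha> q x y \<le> \<mu>" if "(x, y) \<in> E" for x y
      using E1[OF that] by (simp add: pf_def \<beta>_def)
    show ?thesis unfolding raising_balanced_def
    proof (intro exI[of _ q] ballI)
      fix v assume v: "v \<in> {1..n}"
      obtain u where u: "(u, v) \<in> E" "q v \<le> q u + \<beta> u v" using E2[OF v] by blast
      have "\<mu> \<le> pf \<alpha> q u v" using u(2) by (simp add: pf_def \<beta>_def)
      also have "\<dots> \<le> alpha_in E (pf \<alpha> q) v" unfolding alpha_in_def
        using u(1) by (intro Max_ge finite_imageI fin_in[OF E]) auto
      finally have i: "\<mu> \<le> alpha_in E (pf \<alpha> q) v" .
      obtain w where w: "(v, w) \<in> E" using outE[OF v] by blast
      have o: "alpha_out E (pf \<alpha> q) v \<le> \<mu>" unfolding alpha_out_def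
        using w edge_le by (intro Max.boundedI finite_imageI fin_out[OF E]) auto
      show "rho_R E (pf \<alpha> q) v = 0" using i o by (simp add: rho_R_def)
    qed
  qed
qed


definition tr :: "(nat \<Rightarrow> nat \<Rightarrow> real) \<Rightarrow> nat \<Rightarrow> nat \<Rightarrow> real" where
  "tr a = (\<lambda>u v. a v u)"

lemma tr_tr[simp]: "tr (tr a) = a" by (simp add: tr_def)

lemma in_tr: "alpha_in (E\<inverse>) (tr a) v = alpha_out E a v"
  by (simp add: alpha_in_def alpha_out_def tr_def)

lemma out_tr: "alpha_out (E\<inverse>) (tr a) v = alpha_in E a v"
  by (simp add: alpha_in_def alpha_out_def tr_def)

lemma rhoL_tr: "rho_L E a v = rho_R (E\<inverse>) (tr a) v"
  by (simp add: rho_L_def rho_R_def in_tr out_tr)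

lemma lower_tr: "lower_op E v a = tr (raise_op (E\<inverse>) v (tr a))"
  unfolding lower_op_def raise_op_def rhoL_tr balance_op_def in_tr out_tr
  by (auto simp: shift_def tr_def fun_eq_iff field_simps)

lemma run_lower: "run (lower_op E) \<sigma> \<alpha> k = tr (run (raise_op (E\<inverse>)) \<sigma> (tr \<alpha>) k)"
  by (induction k) (simp_all add: lower_tr)

lemma sc_conv: "strongly_connected n E \<Longrightarrow> strongly_connected n (E\<inverse>)"
  unfolding strongly_connected_def by (auto simp: rtrancl_converse)

theorem theorem2:
  fixes n :: nat and E :: "(nat \<times> nat) set" and \<alpha> :: "nat \<Rightarrow> nat \<Rightarrow> real"
  assumes "strongly_connected n E"
  shows "(\<exists>\<alpha>R. raising_balanced n E \<alpha>R \<and>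
            (\<forall>\<sigma>. fair n \<sigma> \<longrightarrow>
               (\<forall>(u, v)\<in>E. (\<lambda>k. run (raise_op E) \<sigma> \<alpha> k u v) \<longlonglongrightarrow> \<alpha>R u v)))
       \<and> (\<exists>\<alpha>L. lowering_balanced n E \<alpha>L \<and>
            (\<forall>\<sigma>. fair n \<sigma> \<longrightarrow>
               (\<forall>(u, v)\<in>E. (\<lambda>k. run (lower_op E) \<sigma> \<alpha> k u v) \<longlonglongrightarrow> \<alpha>L u v)))"
proof
  have E: "E \<subseteq> {1..n} \<times> {1..n}" using assms by (simp add: strongly_connected_def)
  obtain q where "raising_balanced n E (pf \<alpha> q)" using balanced_exists[OF assms] by blast
  from raise_main[OF E this] show "\<exists>\<alpha>R. raising_balanced n E \<alpha>R \<and>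
            (\<forall>\<sigma>. fair n \<sigma> \<longrightarrow>
               (\<forall>(u, v)\<in>E. (\<lambda>k. run (raise_op E) \<sigma> \<alpha> k u v) \<longlonglongrightarrow> \<alpha>R u v))" .
next
  have sc': "strongly_connected n (E\<inverse>)" using sc_conv[OF assms] .
  have E': "E\<inverse> \<subseteq> {1..n} \<times> {1..n}" using sc' by (simp add: strongly_connected_def)
  obtain q where "raising_balanced n (E\<inverse>) (pf (tr \<alpha>) q)" using balanced_exists[OF sc'] by blast
  from raise_main[OF E' this] obtain \<beta> where
    b: "raising_balanced n (E\<inverse>) \<beta>"
       "\<forall>\<sigma>. fair n \<sigma> \<longrightarrow> (\<forall>(u, v)\<in>E\<inverse>. (\<lambda>k. run (raise_op (E\<inverse>)) \<sigma> (tr \<alpha>) k u v) \<longlonglongrightarrow> \<beta> u v)"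
    by blast
  have "lowering_balanced n E (tr \<beta>)"
    using b(1) by (simp add: lowering_balanced_def raising_balanced_def rhoL_tr)
  moreover have "\<forall>\<sigma>. fair n \<sigma> \<longrightarrow> (\<forall>(u, v)\<in>E. (\<lambda>k. run (lower_op E) \<sigma> \<alpha> k u v) \<longlonglongrightarrow> tr \<beta> u v)"
    using b(2) by (auto simp: run_lower tr_def)
  ultimately show "\<exists>\<alpha>L. lowering_balanced n E \<alpha>L \<and>
            (\<forall>\<sigma>. fair n \<sigma> \<longrightarrow>
               (\<forall>(u, v)\<in>E. (\<lambda>k. run (lower_op E) \<sigma> \<alpha> k u v) \<longlonglongrightarrow> \<alpha>L u v))" by blast
qed

end
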